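(* Let $f:(0,\infty)\to\mathbb{R}$ be such that $-f'$ is completely monotone on $(0,\infty)$, and suppose $\int_0^{t_0}|f(t)|t^\beta\,\mathrm{d}t<\infty$ for some $\beta\in(-1,\infty)$ and $t_0>0$. Then for any $\alpha\in[0,1]$, $m,n\in\mathbb{N}^\star$ and $c_1,c_2>0$, $$\int_0^{t_0}|f^{(m)}(c_1t)|^\alpha|f^{(n)}(c_2t)|^{1-\alpha}t^{m\alpha+n(1-\alpha)+\beta}\,\mathrm{d}t\le C\Big(\int_0^{t_0}|f(t)|t^\beta\,\mathrm{d}t+|f(t_0)|t_0^{1+\beta}\Big)$$ and $$\int_0^{t_0}|f(c_1t)|^\alpha|f^{(n)}(c_2t)|^{1-\alpha}t^{n(1-\alpha)+\beta}\,\mathrm{d}t\le C\Big(\int_0^{(c_1\vee1)t_0}|f(t)|t^\beta\,\mathrm{d}t+|f(t_0)|t_0^{1+\beta}\Big),$$ where $c_1\vee1=\max\{c_1,1\}$ and $C>0$ depends only on $m,n,\alpha,\beta,c_1,c_2$.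
   Context: A function $g:(0,\infty)\to\mathbb{R}$ is completely monotone if it is $C^\infty$ and $(-1)^ng^{(n)}(t)\ge0$ for all $t>0$ and $n\in\mathbb{N}$. *)

theory Defs
  imports "HOL-Analysis.Analysis"
begin

definition completely_monotone :: "(real \<Rightarrow> real) \<Rightarrow> bool" where
  "completely_monotone g \<longleftrightarrow>
     (\<forall>n. \<forall>t>0. ((deriv ^^ n) g) differentiable (at t)) \<and>
     (\<forall>n. \<forall>t>0. (-1) ^ n * (deriv ^^ n) g t \<ge> 0)"

text \<open>Real power of a nonnegative base with the convention x^0 = 1 (also for x = 0),
  unlike Isabelle's powr where 0 powr 0 = 0.\<close>
definition npow :: "real \<Rightarrow> real \<Rightarrow> real" where
  "npow x a = (if a = 0 then 1 else x powr a)"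

end

theory Submission
  imports Defs
begin


definition good :: "(real \<Rightarrow> real) \<Rightarrow> bool" where
  "good f \<longleftrightarrow> (\<forall>t>0. f differentiable (at t)) \<and> completely_monotone (\<lambda>t. - deriv f t)"

lemma good_struct:
  assumes "good f"
  shows "\<forall>t>0. (deriv^^(Suc j)) f t = - (deriv^^j) (\<lambda>t. - deriv f t) t
             \<and> (deriv^^(Suc j)) f differentiable (at t)"
proof (induction j)
  case 0
  have h: "(\<lambda>t. - deriv f t) differentiable (at t)" if "t > 0" for t
    using assms that unfolding good_def completely_monotone_def by (metis funpow_0)
  show ?case
  proof (intro allI impI conjI)
    fix t :: real assume t: "t > 0"
    show "(deriv ^^ Suc 0) f t = - (deriv ^^ 0) (\<lambda>t. - deriv f t) t" by simp
    have "(\<lambda>s. - (- deriv f s)) differentiable (at t)"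
      using h[OF t] by (rule differentiable_minus)
    then show "(deriv ^^ Suc 0) f differentiable at t" by simp
  qed
next
  case (Suc j)
  define h where "h = (\<lambda>t. - deriv f t)"
  define g where "g = (deriv^^(Suc j)) f"
  define hj where "hj = (deriv^^j) h"
  have hjd: "hj differentiable (at t)" "deriv hj differentiable (at t)" if "t > 0" for t
    using assms that unfolding good_def completely_monotone_def h_def hj_def
    by (metis funpow.simps(2) o_apply)+
  have eq: "g s = - hj s" if "s > 0" for s using Suc that unfolding g_def hj_def h_def by blast
  have deq: "deriv g s = - deriv hj s" if s: "s > 0" for s
  proof -
    have ev: "eventually (\<lambda>x. g x = - hj x) (nhds s)"
      using eventually_nhds_in_open[of "{0<..}" s] s eq
      by (smt (verit, best) eventually_mono greaterThan_iff open_greaterThan)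
    have "deriv g s = deriv (\<lambda>x. - hj x) s" by (rule deriv_cong_ev[OF ev refl])
    also have "\<dots> = - deriv hj s"
      using hjd(1)[OF s] by (intro DERIV_imp_deriv DERIV_minus) (simp add: DERIV_deriv_iff_real_differentiable)
    finally show ?thesis .
  qed
  show ?case
  proof (intro allI impI conjI)
    fix t :: real assume t: "t > 0"
    show "(deriv ^^ Suc (Suc j)) f t = - (deriv ^^ Suc j) (\<lambda>t. - deriv f t) t"
      using deq[OF t] unfolding g_def hj_def h_def by simp
    have "((\<lambda>x. - deriv hj x) has_real_derivative - deriv (deriv hj) t) (at t)"
      using hjd(2)[OF t] by (intro DERIV_minus) (simp add: DERIV_deriv_iff_real_differentiable)
    then have "(deriv g has_real_derivative - deriv (deriv hj) t) (at t)"
      by (rule has_field_derivative_transform_within_open[of _ _ _ "{0<..}"]) (use t deq in auto)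
    then show "(deriv ^^ Suc (Suc j)) f differentiable at t"
      unfolding g_def by (auto simp: real_differentiable_def)
  qed
qed


lemma good_deriv:
  assumes "good f" "t > 0"
  shows "((deriv^^k) f has_real_derivative (deriv^^(Suc k)) f t) (at t)"
proof -
  have "(deriv^^k) f differentiable (at t)"
  proof (cases k)
    case 0 then show ?thesis using assms unfolding good_def by simp
  next
    case (Suc j) then show ?thesis using good_struct[OF assms(1), of j] assms(2) by blast
  qed
  then show ?thesis by (simp add: DERIV_deriv_iff_real_differentiable)
qed

lemma good_sign:
  assumes "good f" "t > 0"
  shows "(-1)^(Suc j) * (deriv^^(Suc j)) f t \<ge> 0"
proof -
  have "(-1)^j * (deriv^^j) (\<lambda>t. - deriv f t) t \<ge> 0"
    using assms unfolding good_def completely_monotone_def by blast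
  then show ?thesis using good_struct[OF assms(1), of j] assms(2) by simp
qed

lemma good_abs:
  assumes "good f" "t > 0"
  shows "\<bar>(deriv^^(Suc j)) f t\<bar> = (-1)^(Suc j) * (deriv^^(Suc j)) f t"
proof -
  have "\<bar>(deriv^^(Suc j)) f t\<bar> = \<bar>(-1)^(Suc j) * (deriv^^(Suc j)) f t\<bar>"
    by (simp add: abs_mult)
  then show ?thesis using good_sign[OF assms, of j] by simp
qed

lemma good_anti:
  assumes "good f" "0 < x" "x \<le> y"
  shows "\<bar>(deriv^^(Suc j)) f y\<bar> \<le> \<bar>(deriv^^(Suc j)) f x\<bar>"
proof -
  have "(\<lambda>s. (-1)^(Suc j) * (deriv^^(Suc j)) f s) y \<le> (\<lambda>s. (-1)^(Suc j) * (deriv^^(Suc j)) f s) x"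
  proof (rule deriv_nonpos_imp_antimono[of x y "\<lambda>s. (-1)^(Suc j) * (deriv^^(Suc j)) f s" "\<lambda>s. (-1)^(Suc j) * (deriv^^(Suc (Suc j))) f s"])
    fix s assume s: "s \<in> {x..y}"
    then have s0: "s > 0" using assms by auto
    show "((\<lambda>s. (-1)^(Suc j) * (deriv^^(Suc j)) f s) has_real_derivative
           (-1)^(Suc j) * (deriv^^(Suc (Suc j))) f s) (at s)"
      by (rule DERIV_cmult[OF good_deriv[OF assms(1) s0]])
    show "(-1)^(Suc j) * (deriv^^(Suc (Suc j))) f s \<le> 0"
      using good_sign[OF assms(1) s0, of "Suc j"] by simp
  qed (use assms in auto)
  then show ?thesis using good_abs[OF assms(1)] assms by simp
qed

lemma good_L1:
  assumes "good f" "0 < q" "q \<le> r"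
  shows "\<bar>(deriv^^(Suc j)) f r\<bar> * (r - q) \<le> \<bar>(deriv^^j) f q\<bar> + \<bar>(deriv^^j) f r\<bar>"
proof -
  define a where "a = \<bar>(deriv^^(Suc j)) f r\<bar>"
  have "(\<lambda>s. (-1)^j * (deriv^^j) f s + a * s) r \<le> (\<lambda>s. (-1)^j * (deriv^^j) f s + a * s) q"
  proof (rule deriv_nonpos_imp_antimono[of q r "\<lambda>s. (-1)^j * (deriv^^j) f s + a * s" "\<lambda>s. (-1)^j * (deriv^^(Suc j)) f s + a"])
    fix s assume s: "s \<in> {q..r}"
    then have s0: "s > 0" using assms by auto
    show "((\<lambda>s. (-1)^j * (deriv^^j) f s + a * s) has_real_derivative
           (-1)^j * (deriv^^(Suc j)) f s + a) (at s)"
    proof -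
      have "((\<lambda>s. a * s) has_real_derivative a) (at s)"
        using DERIV_cmult[OF DERIV_ident, of a s] by simp
      then show ?thesis by (rule DERIV_add[OF DERIV_cmult[OF good_deriv[OF assms(1) s0]]])
    qed
    have "(-1)^j * (deriv^^(Suc j)) f s = - \<bar>(deriv^^(Suc j)) f s\<bar>"
      using good_abs[OF assms(1) s0, of j] by simp
    moreover have "a \<le> \<bar>(deriv^^(Suc j)) f s\<bar>"
      unfolding a_def using good_anti[OF assms(1) s0, of r j] s by auto
    ultimately show "(-1)^j * (deriv^^(Suc j)) f s + a \<le> 0" by simp
  qed (use assms in auto)
  then have "a * (r - q) \<le> (-1)^j * (deriv^^j) f q - (-1)^j * (deriv^^j) f r"
    by (simp add: algebra_simps)
  also have "\<dots> \<le> \<bar>(deriv^^j) f q\<bar> + \<bar>(deriv^^j) f r\<bar>"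
    by (cases "even j") auto
  finally show ?thesis unfolding a_def .
qed

lemma good_L2:
  "\<exists>K>0. \<forall>f. good f \<longrightarrow> (\<forall>s>0. \<bar>(deriv^^(Suc j)) f s\<bar> * s^(Suc j)
      \<le> K * (\<bar>f (s / 2^(Suc j))\<bar> + \<bar>f (s / 2^j)\<bar>))"
proof (induction j)
  case 0
  show ?case
  proof (intro exI[of _ 2] conjI allI impI)
    fix f :: "real \<Rightarrow> real" and s :: real assume f: "good f" and s: "s > 0"
    have "\<bar>(deriv^^(Suc 0)) f s\<bar> * (s - s/2) \<le> \<bar>(deriv^^0) f (s/2)\<bar> + \<bar>(deriv^^0) f s\<bar>"
      by (rule good_L1[OF f]) (use s in auto)
    then show "\<bar>(deriv^^(Suc 0)) f s\<bar> * s^(Suc 0) \<le> 2 * (\<bar>f (s / 2^(Suc 0))\<bar> + \<bar>f (s / 2^0)\<bar>)"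
      by simp
  qed simp
next
  case (Suc j)
  then obtain K where K: "K > 0" "\<And>f s. good f \<Longrightarrow> s > 0 \<Longrightarrow> \<bar>(deriv^^(Suc j)) f s\<bar> * s^(Suc j)
      \<le> K * (\<bar>f (s / 2^(Suc j))\<bar> + \<bar>f (s / 2^j)\<bar>)" by blast
  show ?case
  proof (intro exI[of _ "4 * 2^(Suc j) * K"] conjI allI impI)
    show "0 < 4 * 2^(Suc j) * K" using K by simp
    fix f :: "real \<Rightarrow> real" and s :: real assume f: "good f" and s: "s > 0"
    have "\<bar>(deriv^^(Suc (Suc j))) f s\<bar> * (s - s/2) \<le> \<bar>(deriv^^(Suc j)) f (s/2)\<bar> + \<bar>(deriv^^(Suc j)) f s\<bar>"
      by (rule good_L1[OF f]) (use s in auto)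
    moreover have "\<bar>(deriv^^(Suc j)) f s\<bar> \<le> \<bar>(deriv^^(Suc j)) f (s/2)\<bar>"
      by (rule good_anti[OF f]) (use s in auto)
    ultimately have "\<bar>(deriv^^(Suc (Suc j))) f s\<bar> * s \<le> 4 * \<bar>(deriv^^(Suc j)) f (s/2)\<bar>"
      by simp
    then have "\<bar>(deriv^^(Suc (Suc j))) f s\<bar> * s * s^(Suc j) \<le> 4 * \<bar>(deriv^^(Suc j)) f (s/2)\<bar> * s^(Suc j)"
      using s by (intro mult_right_mono) auto
    also have "\<dots> = 4 * 2^(Suc j) * (\<bar>(deriv^^(Suc j)) f (s/2)\<bar> * (s/2)^(Suc j))"
      by (simp add: power_divide)
    also have "\<dots> \<le> 4 * 2^(Suc j) * (K * (\<bar>f (s/2 / 2^(Suc j))\<bar> + \<bar>f (s/2 / 2^j)\<bar>))"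
      using K(2)[OF f, of "s/2"] s by (intro mult_left_mono) auto
    finally show "\<bar>(deriv^^(Suc (Suc j))) f s\<bar> * s^(Suc (Suc j))
      \<le> 4 * 2^(Suc j) * K * (\<bar>f (s / 2^(Suc (Suc j)))\<bar> + \<bar>f (s / 2^(Suc j))\<bar>)"
      by (simp add: algebra_simps)
  qed
qed

lemma good_tail:
  assumes "good f" "0 < t0" "t0 \<le> s"
  shows "\<bar>f s\<bar> \<le> \<bar>f t0\<bar> + \<bar>(deriv^^1) f t0\<bar> * (s - t0)"
proof -
  have "f s \<le> f t0"
  proof (rule deriv_nonpos_imp_antimono[of t0 s f "(deriv^^1) f"])
    fix x assume x: "x \<in> {t0..s}"
    then have x0: "x > 0" using assms by auto
    show "(f has_real_derivative (deriv^^1) f x) (at x)"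
      using good_deriv[OF assms(1) x0, of 0] by simp
    show "(deriv^^1) f x \<le> 0" using good_sign[OF assms(1) x0, of 0] by simp
  qed (use assms in auto)
  moreover have "(\<lambda>x. f x - (deriv^^1) f t0 * x) t0 \<le> (\<lambda>x. f x - (deriv^^1) f t0 * x) s"
  proof (rule deriv_nonneg_imp_mono[of t0 s "\<lambda>x. f x - (deriv^^1) f t0 * x" "\<lambda>x. (deriv^^1) f x - (deriv^^1) f t0"])
    fix x assume x: "x \<in> {t0..s}"
    then have x0: "x > 0" using assms by auto
    show "((\<lambda>x. f x - (deriv^^1) f t0 * x) has_real_derivative (deriv^^1) f x - (deriv^^1) f t0) (at x)"
    proof -
      have "((\<lambda>x. (deriv^^1) f t0 * x) has_real_derivative (deriv^^1) f t0) (at x)"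
        using DERIV_cmult[OF DERIV_ident, of "(deriv^^1) f t0" x] by simp
      moreover have "(f has_real_derivative (deriv^^1) f x) (at x)"
        using good_deriv[OF assms(1) x0, of 0] by simp
      ultimately show ?thesis using DERIV_diff by blast
    qed
    have "\<bar>(deriv^^(Suc 0)) f x\<bar> \<le> \<bar>(deriv^^(Suc 0)) f t0\<bar>"
      by (rule good_anti[OF assms(1)]) (use x assms in auto)
    then show "(deriv^^1) f x - (deriv^^1) f t0 \<ge> 0"
      using good_abs[OF assms(1) x0, of 0] good_abs[OF assms(1) assms(2), of 0] by simp
  qed (use assms in auto)
  moreover have "(deriv^^1) f t0 = - \<bar>(deriv^^1) f t0\<bar>"
    using good_abs[OF assms(1) assms(2), of 0] by simp
  ultimately have "f t0 - \<bar>(deriv^^1) f t0\<bar> * (s - t0) \<le> f s" "f s \<le> f t0"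
    by (metis (no_types, opaque_lifting) add.commute add_diff_cancel_right diff_add_cancel diff_le_eq mult.commute mult_minus_right right_diff_distrib' uminus_add_conv_diff)+
  moreover have "0 \<le> \<bar>(deriv^^1) f t0\<bar> * (s - t0)" using assms by simp
  ultimately show ?thesis by linarith
qed


lemma good_cont:
  assumes "good f"
  shows "continuous_on {0<..} ((deriv^^k) f)"
proof (rule continuous_at_imp_continuous_on, intro ballI)
  fix t :: real assume "t \<in> {0<..}"
  then have "((deriv^^k) f has_real_derivative (deriv^^(Suc k)) f t) (at t)"
    using good_deriv[OF assms] by simp
  then show "isCont ((deriv^^k) f) t" by (rule DERIV_isCont)
qed

lemma meas_cont:
  fixes q :: "real \<Rightarrow> real"
  assumes "open S" "continuous_on S q"
  shows "(\<lambda>x. ennreal (q x) * indicator S x) \<in> borel_measurable borel"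
proof -
  have "(\<lambda>x. indicator S x *\<^sub>R q x) \<in> borel_measurable borel"
    by (rule borel_measurable_continuous_on_indicator) (use assms in auto)
  then have "(\<lambda>x. ennreal (indicator S x *\<^sub>R q x)) \<in> borel_measurable borel" by measurable
  moreover have "(\<lambda>x. ennreal (indicator S x *\<^sub>R q x)) = (\<lambda>x. ennreal (q x) * indicator S x)"
    by (auto simp: indicator_def fun_eq_iff)
  ultimately show ?thesis by simp
qed

lemma int_powr:
  fixes \<beta> T :: real
  assumes "\<beta> > -1" "T > 0"
  shows "(\<integral>\<^sup>+ t \<in> {0<..<T}. ennreal (t powr \<beta>) \<partial>lborel) = ennreal (T powr (1 + \<beta>) / (1 + \<beta>))"
proof -
  have "((\<lambda>x. x powr \<beta>) has_integral (T powr (\<beta>+1) / (\<beta>+1))) {0..T}"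
    by (rule has_integral_powr_from_0) (use assms in auto)
  then have "((\<lambda>x. x powr \<beta>) has_integral (T powr (1+\<beta>) / (1+\<beta>))) {0<..<T}"
    by (simp add: has_integral_Icc_iff_Ioo add.commute)
  then show ?thesis
    by (intro nn_integral_has_integral_lebesgue') auto
qed

lemma nn_subst:
  fixes d :: real and G :: "real \<Rightarrow> ennreal"
  assumes "d > 0" "G \<in> borel_measurable borel"
  shows "(\<integral>\<^sup>+ t. G (d * t) \<partial>lborel) = ennreal (1 / d) * (\<integral>\<^sup>+ t. G t \<partial>lborel)"
proof -
  have "(\<integral>\<^sup>+ t. G t \<partial>lborel) = ennreal \<bar>d\<bar> * (\<integral>\<^sup>+ t. G (0 + d * t) \<partial>lborel)"
    by (rule nn_integral_real_affine) (use assms in auto)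
  then have "ennreal (1/d) * (\<integral>\<^sup>+ t. G t \<partial>lborel) = ennreal (1/d) * ennreal d * (\<integral>\<^sup>+ t. G (d * t) \<partial>lborel)"
    using assms by (simp add: mult.assoc)
  also have "ennreal (1/d) * ennreal d = 1"
    using assms by (simp flip: ennreal_mult)
  finally show ?thesis by simp
qed


lemma good_f_anti:
  assumes "good f" "0 < x" "x \<le> y"
  shows "f y \<le> f x"
proof (rule deriv_nonpos_imp_antimono[of x y f "(deriv^^1) f"])
  fix s assume s: "s \<in> {x..y}"
  then have s0: "s > 0" using assms by auto
  show "(f has_real_derivative (deriv^^1) f s) (at s)"
    using good_deriv[OF assms(1) s0, of 0] by simp
  show "(deriv^^1) f s \<le> 0" using good_sign[OF assms(1) s0, of 0] by simp
qed (use assms in auto)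

lemma real_ineq_Q:
  fixes d b q P Ar F0 F2 G1 t0 e :: real
  assumes "d > 0" "b > 0" "q > 0" "P > 0" "Ar \<ge> 0" "F0 \<ge> 0" "F2 \<ge> 0" "G1 \<ge> 0" "t0 > 0" "e \<ge> 0"
    and a: "G1 * (t0 / 2) \<le> F2 + F0"
    and bb: "F2 * (P / (q * b)) \<le> Ar + F0 * (P / (q * b))"
  shows "e * Ar + (F0 + G1 * d * t0) * (P / b) \<le> (e + 2 * d * q + (1 + 4 * d) / b) * (Ar + F0 * P)"
proof -
  have b2: "F2 * P / b \<le> q * Ar + F0 * P / b"
  proof -
    have "q * (F2 * (P / (q * b))) \<le> q * (Ar + F0 * (P / (q * b)))"
      using bb assms by (intro mult_left_mono) auto
    then show ?thesis using assms by (simp add: field_simps)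
  qed
  have "G1 * t0 \<le> 2 * (F2 + F0)" using a by simp
  then have "d * (G1 * t0) * (P / b) \<le> d * (2 * (F2 + F0)) * (P / b)"
    using assms by (intro mult_right_mono mult_left_mono) auto
  also have "\<dots> = 2 * d * (F2 * P / b) + 2 * d * F0 * P / b" by (simp add: algebra_simps add_divide_distrib)
  also have "\<dots> \<le> 2 * d * (q * Ar + F0 * P / b) + 2 * d * F0 * P / b"
    using b2 assms by (intro add_right_mono mult_left_mono) auto
  finally have c: "d * (G1 * t0) * (P / b) \<le> 2 * d * q * Ar + 4 * d * F0 * P / b"
    by (simp add: field_simps)
  have "e * Ar + (F0 + G1 * d * t0) * (P / b) = e * Ar + F0 * P / b + d * (G1 * t0) * (P / b)"
    by (simp add: algebra_simps add_divide_distrib)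
  also have "\<dots> \<le> e * Ar + F0 * P / b + (2 * d * q * Ar + 4 * d * F0 * P / b)"
    using c by simp
  also have "\<dots> \<le> (e + 2 * d * q + (1 + 4 * d) / b) * (Ar + F0 * P)"
  proof -
    define X where "X = F0 * P / b"
    have e1: "(1 + 4 * d) / b * (Ar + F0 * P) = (1 + 4 * d) / b * Ar + X + 4 * d * X"
      unfolding X_def using assms by (simp add: field_simps)
    have e2: "(e + 2 * d * q + (1 + 4 * d) / b) * (Ar + F0 * P)
       = e * Ar + e * (F0 * P) + 2 * d * q * Ar + 2 * d * q * (F0 * P) + (1 + 4 * d) / b * (Ar + F0 * P)"
      by (simp add: algebra_simps)
    have n: "0 \<le> e * (F0 * P)" "0 \<le> 2 * d * q * (F0 * P)" "0 \<le> (1 + 4 * d) / b * Ar"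
      using assms by auto
    have e3: "4 * d * F0 * P / b = 4 * d * X" unfolding X_def by simp
    show ?thesis unfolding e2 e1 e3 using n by (simp add: X_def)
  qed
  finally show ?thesis .
qed


lemma good_Q:
  fixes \<beta> d :: real
  assumes "\<beta> > -1" "d > 0"
  shows "\<exists>K>0. \<forall>f t0. good f \<and> t0 > 0 \<and> (\<integral>\<^sup>+ t\<in>{0<..<t0}. ennreal (\<bar>f t\<bar> * t powr \<beta>) \<partial>lborel) < \<infinity> \<longrightarrow>
     (\<integral>\<^sup>+ t\<in>{0<..<t0}. ennreal (\<bar>f (d * t)\<bar> * t powr \<beta>) \<partial>lborel)
       \<le> ennreal K * ((\<integral>\<^sup>+ t\<in>{0<..<t0}. ennreal (\<bar>f t\<bar> * t powr \<beta>) \<partial>lborel) + ennreal (\<bar>f t0\<bar> * t0 powr (1 + \<beta>)))"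
proof -
  define q where "q = (2::real) powr (1 + \<beta>)"
  define b where "b = 1 + \<beta>"
  define e where "e = d powr (-1 - \<beta>)"
  define K where "K = e + 2 * d * q + (1 + 4 * d) / b"
  have b0: "b > 0" using assms b_def by simp
  have q0: "q > 0" unfolding q_def by simp
  have e0: "e > 0" unfolding e_def using assms by simp
  have K0: "K > 0" unfolding K_def using e0 q0 b0 assms by (intro add_pos_pos) auto
  show ?thesis
  proof (intro exI[of _ K] conjI allI impI)
    show "K > 0" by (rule K0)
    fix f :: "real \<Rightarrow> real" and t0 :: real
    assume H: "good f \<and> t0 > 0 \<and> (\<integral>\<^sup>+ t\<in>{0<..<t0}. ennreal (\<bar>f t\<bar> * t powr \<beta>) \<partial>lborel) < \<infinity>"
    then have f: "good f" and t0: "t0 > 0" by auto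
    define G where "G = (\<lambda>s. ennreal (\<bar>f s\<bar> * s powr \<beta>) * indicator {0<..<t0} s)"
    define A where "A = (\<integral>\<^sup>+ t. G t \<partial>lborel)"
    have Aeq: "(\<integral>\<^sup>+ t\<in>{0<..<t0}. ennreal (\<bar>f t\<bar> * t powr \<beta>) \<partial>lborel) = A"
      unfolding A_def G_def by simp
    obtain Ar where Ar: "A = ennreal Ar" "Ar \<ge> 0"
      using H Aeq by (auto simp: less_top_ennreal)
    have fc: "continuous_on {0<..} f" using good_cont[OF f, of 0] by simp
    have Gm[measurable]: "G \<in> borel_measurable borel"
      unfolding G_def
    proof (rule meas_cont)
      have "continuous_on {0<..<t0} f" using fc by (rule continuous_on_subset) auto
      then show "continuous_on {0<..<t0} (\<lambda>s. \<bar>f s\<bar> * s powr \<beta>)"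
        by (intro continuous_intros) auto
    qed auto
    define Pw where "Pw = (\<lambda>T u. ennreal (u powr \<beta>) * indicator {0<..<T::real} u)"
    have Pwm[measurable]: "Pw T \<in> borel_measurable borel" for T
      unfolding Pw_def by (rule meas_cont) (auto intro!: continuous_intros)
    have Pwi: "(\<integral>\<^sup>+ u. Pw T u \<partial>lborel) = ennreal (T powr (1 + \<beta>) / (1 + \<beta>))" if "T > 0" for T
      unfolding Pw_def using int_powr[OF assms(1) that] by simp
    define F0 where "F0 = \<bar>f t0\<bar>"
    define F2 where "F2 = \<bar>f (t0/2)\<bar>"
    define G1 where "G1 = \<bar>(deriv^^1) f t0\<bar>"
    define P where "P = t0 powr (1 + \<beta>)"
    have P0: "P > 0" unfolding P_def using t0 by simp
    have P2: "(t0/2) powr (1 + \<beta>) / (1 + \<beta>) = P / (q * b)"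
      unfolding P_def q_def b_def using t0 by (simp add: powr_divide)
    have pw1: "ennreal F2 * Pw (t0/2) u \<le> G u + ennreal F0 * Pw (t0/2) u" for u
    proof (cases "u \<in> {0<..<t0/2}")
      case True
      then have u: "0 < u" "u < t0/2" by auto
      have "f (t0/2) \<le> f u" by (rule good_f_anti[OF f]) (use u in auto)
      moreover have "f t0 \<le> f (t0/2)" by (rule good_f_anti[OF f]) (use t0 in auto)
      ultimately have "F2 \<le> \<bar>f u\<bar> + F0" unfolding F2_def F0_def by linarith
      then have "F2 * u powr \<beta> \<le> \<bar>f u\<bar> * u powr \<beta> + F0 * u powr \<beta>"
        by (simp add: mult_right_mono flip: distrib_right)
      then have "ennreal (F2 * u powr \<beta>) \<le> ennreal (\<bar>f u\<bar> * u powr \<beta>) + ennreal (F0 * u powr \<beta>)"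
        by (simp add: F0_def flip: ennreal_plus)
      then show ?thesis using True u t0 unfolding Pw_def G_def
        by (simp add: F2_def F0_def ennreal_mult)
    qed (simp add: Pw_def)
    have "ennreal F2 * ennreal (P / (q * b)) = (\<integral>\<^sup>+ u. ennreal F2 * Pw (t0/2) u \<partial>lborel)"
      using Pwi[of "t0/2"] t0 P2 by (simp add: nn_integral_cmult)
    also have "\<dots> \<le> (\<integral>\<^sup>+ u. G u + ennreal F0 * Pw (t0/2) u \<partial>lborel)"
      by (rule nn_integral_mono) (rule pw1)
    also have "\<dots> = A + ennreal F0 * ennreal (P / (q * b))"
      using Pwi[of "t0/2"] t0 P2 by (simp add: nn_integral_add nn_integral_cmult A_def)
    finally have X: "ennreal F2 * ennreal (P / (q * b)) \<le> A + ennreal F0 * ennreal (P / (q * b))" .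
    have pq: "0 \<le> P / (q * b)" using P0 q0 b0 by simp
    have F0n: "0 \<le> F0" and F2n: "0 \<le> F2" by (simp_all add: F0_def F2_def)
    have "ennreal (F2 * (P / (q * b))) \<le> ennreal (Ar + F0 * (P / (q * b)))"
      using X by (simp only: ennreal_mult[OF F2n pq] ennreal_plus[OF Ar(2) mult_nonneg_nonneg[OF F0n pq]]
           ennreal_mult[OF F0n pq] Ar(1))
    then have bb: "F2 * (P / (q * b)) \<le> Ar + F0 * (P / (q * b))"
      using Ar P0 q0 b0 by (subst (asm) ennreal_le_iff) (auto simp: F0_def)
    have a: "G1 * (t0 / 2) \<le> F2 + F0"
      using good_L1[OF f, of "t0/2" t0 0] t0 unfolding G1_def F2_def F0_def by simp
    define M where "M = F0 + G1 * d * t0"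
    have pw2: "ennreal (\<bar>f (d * t)\<bar> * t powr \<beta>) * indicator {0<..<t0} t
        \<le> ennreal (d powr (-\<beta>)) * G (d * t) + ennreal M * Pw t0 t" for t
    proof (cases "t \<in> {0<..<t0}")
      case True
      then have tt: "0 < t" "t < t0" by auto
      show ?thesis
      proof (cases "d * t < t0")
        case True
        have "d powr (-\<beta>) * (\<bar>f (d * t)\<bar> * (d * t) powr \<beta>) = \<bar>f (d * t)\<bar> * t powr \<beta>"
          using assms tt by (simp add: powr_mult powr_minus field_simps)
        note eq = this
        have "ennreal (d powr (-\<beta>)) * G (d * t) = ennreal (d powr (-\<beta>)) * ennreal (\<bar>f (d * t)\<bar> * (d * t) powr \<beta>)"
          using True tt assms unfolding G_def by simp
        also have "\<dots> = ennreal (d powr (-\<beta>) * (\<bar>f (d * t)\<bar> * (d * t) powr \<beta>))"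
          by (rule ennreal_mult[symmetric]) auto
        finally have "ennreal (\<bar>f (d * t)\<bar> * t powr \<beta>) = ennreal (d powr (-\<beta>)) * G (d * t)"
          using eq by simp
        then show ?thesis using tt by simp
      next
        case False
        have "\<bar>f (d * t)\<bar> \<le> F0 + G1 * (d * t - t0)"
          using good_tail[OF f t0, of "d * t"] False unfolding F0_def G1_def by simp
        also have "\<dots> \<le> M"
        proof -
          have "d * t - t0 \<le> d * t0" using tt assms t0 by (smt (verit) mult_left_mono)
          then have "G1 * (d * t - t0) \<le> G1 * (d * t0)" unfolding G1_def by (rule mult_left_mono) simp
          then show ?thesis unfolding M_def by (simp add: mult.assoc)
        qed
        finally have "\<bar>f (d * t)\<bar> * t powr \<beta> \<le> M * t powr \<beta>" by (simp add: mult_right_mono)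
        then have "ennreal (\<bar>f (d * t)\<bar> * t powr \<beta>) \<le> ennreal M * Pw t0 t"
          using tt unfolding Pw_def by (simp add: ennreal_leI flip: ennreal_mult)
        then show ?thesis using tt by (simp add: add_increasing)
      qed
    qed simp
    have "(\<integral>\<^sup>+ t\<in>{0<..<t0}. ennreal (\<bar>f (d * t)\<bar> * t powr \<beta>) \<partial>lborel)
        \<le> (\<integral>\<^sup>+ t. ennreal (d powr (-\<beta>)) * G (d * t) + ennreal M * Pw t0 t \<partial>lborel)"
      by (rule nn_integral_mono) (rule pw2)
    also have "\<dots> = ennreal (d powr (-\<beta>)) * (\<integral>\<^sup>+ t. G (d * t) \<partial>lborel) + ennreal M * (\<integral>\<^sup>+ t. Pw t0 t \<partial>lborel)"
      by (simp add: nn_integral_add nn_integral_cmult)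
    also have "\<dots> = ennreal (d powr (-\<beta>)) * (ennreal (1/d) * A) + ennreal M * ennreal (P / b)"
      using nn_subst[OF assms(2) Gm] Pwi[OF t0] by (simp add: A_def P_def b_def)
    also have "\<dots> = ennreal (e * Ar + M * (P / b))"
    proof -
      have "d powr (-\<beta>) * (1/d) = e" unfolding e_def using assms
        by (simp add: powr_diff powr_minus divide_simps)
      then have "e * Ar = d powr (-\<beta>) * ((1/d) * Ar)" by (metis mult.assoc)
      moreover have "M \<ge> 0" unfolding M_def G1_def F0_def using assms t0 by simp
      ultimately have eAr: "e * Ar = d powr (-\<beta>) * ((1/d) * Ar)" and M0: "M \<ge> 0" by auto
      have n: "0 \<le> d powr (-\<beta>)" "0 \<le> 1/d" "0 \<le> P/b" "0 \<le> (1/d) * Ar" "0 \<le> e * Ar" "0 \<le> M * (P/b)"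
        using assms Ar P0 b0 e0 M0 by auto
      have "ennreal (e * Ar + M * (P / b)) = ennreal (e * Ar) + ennreal (M * (P / b))"
        by (rule ennreal_plus[OF n(5) n(6)])
      also have "ennreal (e * Ar) = ennreal (d powr (-\<beta>)) * (ennreal (1/d) * ennreal Ar)"
        unfolding eAr ennreal_mult[OF n(1) n(4)] ennreal_mult[OF n(2) Ar(2)] ..
      also have "ennreal (M * (P / b)) = ennreal M * ennreal (P / b)"
        by (rule ennreal_mult[OF M0 n(3)])
      finally show ?thesis using Ar(1) by simp
    qed
    also have "\<dots> \<le> ennreal (K * (Ar + F0 * P))"
      unfolding K_def M_def
      by (intro ennreal_leI real_ineq_Q[OF assms(2) b0 q0 P0 Ar(2) _ _ _ t0 _ a bb])
         (use e0 in \<open>auto simp: F0_def F2_def G1_def\<close>)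
    also have "\<dots> = ennreal K * (A + ennreal (\<bar>f t0\<bar> * t0 powr (1 + \<beta>)))"
      using Ar K0 P0 by (simp add: F0_def P_def ennreal_mult ennreal_plus)
    finally show "(\<integral>\<^sup>+ t\<in>{0<..<t0}. ennreal (\<bar>f (d * t)\<bar> * t powr \<beta>) \<partial>lborel)
       \<le> ennreal K * ((\<integral>\<^sup>+ t\<in>{0<..<t0}. ennreal (\<bar>f t\<bar> * t powr \<beta>) \<partial>lborel) + ennreal (\<bar>f t0\<bar> * t0 powr (1 + \<beta>)))"
      unfolding Aeq .
  qed
qed

lemma meas_scaled:
  assumes "good f" "d > 0"
  shows "(\<lambda>t. ennreal (\<bar>(deriv^^k) f (d * t)\<bar> * t powr \<gamma>) * indicator {0<..<T} t) \<in> borel_measurable borel"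
proof (rule meas_cont)
  have "continuous_on {0<..<T} (\<lambda>t. (deriv^^k) f (d * t))"
    by (rule continuous_on_compose2[OF good_cont[OF assms(1), of k]])
       (use assms in \<open>auto intro!: continuous_intros\<close>)
  then show "continuous_on {0<..<T} (\<lambda>t. \<bar>(deriv^^k) f (d * t)\<bar> * t powr \<gamma>)"
    by (intro continuous_intros) auto
qed auto

lemma good_M1:
  fixes \<beta> c :: real
  assumes "\<beta> > -1" "c > 0"
  shows "\<exists>K>0. \<forall>f t0. good f \<and> t0 > 0 \<and> (\<integral>\<^sup>+ t\<in>{0<..<t0}. ennreal (\<bar>f t\<bar> * t powr \<beta>) \<partial>lborel) < \<infinity> \<longrightarrow>
     (\<integral>\<^sup>+ t\<in>{0<..<t0}. ennreal (\<bar>(deriv^^(Suc j)) f (c * t)\<bar> * t powr (real (Suc j) + \<beta>)) \<partial>lborel)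
       \<le> ennreal K * ((\<integral>\<^sup>+ t\<in>{0<..<t0}. ennreal (\<bar>f t\<bar> * t powr \<beta>) \<partial>lborel) + ennreal (\<bar>f t0\<bar> * t0 powr (1 + \<beta>)))"
proof -
  obtain K2 where K2: "K2 > 0" "\<And>f s. good f \<Longrightarrow> s > 0 \<Longrightarrow> \<bar>(deriv^^(Suc j)) f s\<bar> * s^(Suc j)
      \<le> K2 * (\<bar>f (s / 2^(Suc j))\<bar> + \<bar>f (s / 2^j)\<bar>)" using good_L2[of j] by blast
  define d1 where "d1 = c / 2^(Suc j)"
  define d2 where "d2 = c / 2^j"
  have d1: "d1 > 0" and d2: "d2 > 0" using assms by (simp_all add: d1_def d2_def)
  obtain K3 where K3: "K3 > 0" "\<And>f t0. good f \<Longrightarrow> t0 > 0 \<Longrightarrow> (\<integral>\<^sup>+ t\<in>{0<..<t0}. ennreal (\<bar>f t\<bar> * t powr \<beta>) \<partial>lborel) < \<infinity> \<Longrightarrow>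
     (\<integral>\<^sup>+ t\<in>{0<..<t0}. ennreal (\<bar>f (d1 * t)\<bar> * t powr \<beta>) \<partial>lborel)
       \<le> ennreal K3 * ((\<integral>\<^sup>+ t\<in>{0<..<t0}. ennreal (\<bar>f t\<bar> * t powr \<beta>) \<partial>lborel) + ennreal (\<bar>f t0\<bar> * t0 powr (1 + \<beta>)))"
    using good_Q[OF assms(1) d1] by blast
  obtain K4 where K4: "K4 > 0" "\<And>f t0. good f \<Longrightarrow> t0 > 0 \<Longrightarrow> (\<integral>\<^sup>+ t\<in>{0<..<t0}. ennreal (\<bar>f t\<bar> * t powr \<beta>) \<partial>lborel) < \<infinity> \<Longrightarrow>
     (\<integral>\<^sup>+ t\<in>{0<..<t0}. ennreal (\<bar>f (d2 * t)\<bar> * t powr \<beta>) \<partial>lborel)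
       \<le> ennreal K4 * ((\<integral>\<^sup>+ t\<in>{0<..<t0}. ennreal (\<bar>f t\<bar> * t powr \<beta>) \<partial>lborel) + ennreal (\<bar>f t0\<bar> * t0 powr (1 + \<beta>)))"
    using good_Q[OF assms(1) d2] by blast
  define \<kappa> where "\<kappa> = K2 / c^(Suc j)"
  have \<kappa>0: "\<kappa> > 0" unfolding \<kappa>_def using K2 assms by simp
  show ?thesis
  proof (intro exI[of _ "\<kappa> * (K3 + K4)"] conjI allI impI)
    show "\<kappa> * (K3 + K4) > 0" using \<kappa>0 K3 K4 by simp
    fix f :: "real \<Rightarrow> real" and t0 :: real
    assume H: "good f \<and> t0 > 0 \<and> (\<integral>\<^sup>+ t\<in>{0<..<t0}. ennreal (\<bar>f t\<bar> * t powr \<beta>) \<partial>lborel) < \<infinity>"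
    then have f: "good f" and t0: "t0 > 0" by auto
    define X where "X = (\<integral>\<^sup>+ t\<in>{0<..<t0}. ennreal (\<bar>f t\<bar> * t powr \<beta>) \<partial>lborel) + ennreal (\<bar>f t0\<bar> * t0 powr (1 + \<beta>))"
    define H1 where "H1 = (\<lambda>t. ennreal (\<bar>(deriv^^0) f (d1 * t)\<bar> * t powr \<beta>) * indicator {0<..<t0} t)"
    define H2 where "H2 = (\<lambda>t. ennreal (\<bar>(deriv^^0) f (d2 * t)\<bar> * t powr \<beta>) * indicator {0<..<t0} t)"
    have H1m: "H1 \<in> borel_measurable borel" unfolding H1_def by (rule meas_scaled[OF f d1])
    have H2m: "H2 \<in> borel_measurable borel" unfolding H2_def by (rule meas_scaled[OF f d2])
    have pw: "ennreal (\<bar>(deriv^^(Suc j)) f (c * t)\<bar> * t powr (real (Suc j) + \<beta>)) * indicator {0<..<t0} t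
        \<le> ennreal \<kappa> * (H1 t + H2 t)" for t
    proof (cases "t \<in> {0<..<t0}")
      case True
      then have t: "t > 0" by auto
      have ct: "c * t > 0" using t assms by simp
      have "\<bar>(deriv^^(Suc j)) f (c * t)\<bar> * t powr (real (Suc j) + \<beta>)
          = (\<bar>(deriv^^(Suc j)) f (c * t)\<bar> * (c * t)^(Suc j)) / c^(Suc j) * t powr \<beta>"
        using t assms by (simp add: powr_add powr_realpow power_mult_distrib)
      also have "\<dots> \<le> (K2 * (\<bar>f (c * t / 2^(Suc j))\<bar> + \<bar>f (c * t / 2^j)\<bar>)) / c^(Suc j) * t powr \<beta>"
        using K2(2)[OF f ct] assms by (intro mult_right_mono divide_right_mono) auto
      also have "\<dots> = \<kappa> * (\<bar>f (d1 * t)\<bar> * t powr \<beta> + \<bar>f (d2 * t)\<bar> * t powr \<beta>)"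
        unfolding \<kappa>_def d1_def d2_def by (simp add: field_simps)
      finally have "ennreal (\<bar>(deriv^^(Suc j)) f (c * t)\<bar> * t powr (real (Suc j) + \<beta>))
          \<le> ennreal (\<kappa> * (\<bar>f (d1 * t)\<bar> * t powr \<beta> + \<bar>f (d2 * t)\<bar> * t powr \<beta>))"
        by (rule ennreal_leI)
      also have "\<dots> = ennreal \<kappa> * (ennreal (\<bar>f (d1 * t)\<bar> * t powr \<beta>) + ennreal (\<bar>f (d2 * t)\<bar> * t powr \<beta>))"
        using \<kappa>0 by (simp add: ennreal_mult ennreal_plus)
      finally show ?thesis using True by (simp add: H1_def H2_def)
    qed simp
    have "(\<integral>\<^sup>+ t\<in>{0<..<t0}. ennreal (\<bar>(deriv^^(Suc j)) f (c * t)\<bar> * t powr (real (Suc j) + \<beta>)) \<partial>lborel)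
        \<le> (\<integral>\<^sup>+ t. ennreal \<kappa> * (H1 t + H2 t) \<partial>lborel)"
      by (rule nn_integral_mono) (rule pw)
    also have "\<dots> = ennreal \<kappa> * ((\<integral>\<^sup>+ t. H1 t \<partial>lborel) + (\<integral>\<^sup>+ t. H2 t \<partial>lborel))"
      using H1m H2m by (simp add: nn_integral_add nn_integral_cmult)
    also have "\<dots> \<le> ennreal \<kappa> * (ennreal K3 * X + ennreal K4 * X)"
      using K3(2)[OF f t0] K4(2)[OF f t0] H unfolding H1_def H2_def X_def
      by (intro mult_left_mono add_mono) auto
    also have "\<dots> = ennreal (\<kappa> * (K3 + K4)) * X"
      using \<kappa>0 K3 K4 by (simp add: ennreal_mult ennreal_plus distrib_left distrib_right mult.assoc)
    finally show "(\<integral>\<^sup>+ t\<in>{0<..<t0}. ennreal (\<bar>(deriv^^(Suc j)) f (c * t)\<bar> * t powr (real (Suc j) + \<beta>)) \<partial>lborel)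
       \<le> ennreal (\<kappa> * (K3 + K4)) * ((\<integral>\<^sup>+ t\<in>{0<..<t0}. ennreal (\<bar>f t\<bar> * t powr \<beta>) \<partial>lborel) + ennreal (\<bar>f t0\<bar> * t0 powr (1 + \<beta>)))"
      unfolding X_def .
  qed
qed



lemma young_npow:
  fixes x y t \<alpha> g1 g2 \<beta> :: real
  assumes "x \<ge> 0" "y \<ge> 0" "t > 0" "0 \<le> \<alpha>" "\<alpha> \<le> 1"
  shows "npow x \<alpha> * npow y (1 - \<alpha>) * t powr (g1 * \<alpha> + g2 * (1 - \<alpha>) + \<beta>)
     \<le> x * t powr (g1 + \<beta>) + y * t powr (g2 + \<beta>)"
proof -
  consider "\<alpha> = 0" | "\<alpha> = 1" | "0 < \<alpha>" "\<alpha> < 1" using assms by linarith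
  then show ?thesis
  proof cases
    case 1
    then show ?thesis using assms by (simp add: npow_def powr_one)
  next
    case 2
    then show ?thesis using assms by (simp add: npow_def powr_one)
  next
    case 3
    define X where "X = x * t powr g1"
    define Y where "Y = y * t powr g2"
    define Mx where "Mx = max X Y"
    have X0: "X \<ge> 0" and Y0: "Y \<ge> 0" using assms by (simp_all add: X_def Y_def)
    have "npow x \<alpha> * npow y (1 - \<alpha>) * t powr (g1 * \<alpha> + g2 * (1 - \<alpha>) + \<beta>)
        = (x powr \<alpha> * (t powr g1) powr \<alpha>) * (y powr (1 - \<alpha>) * (t powr g2) powr (1 - \<alpha>)) * t powr \<beta>"
      using 3 assms by (simp add: npow_def powr_add powr_powr mult_ac)
    also have "\<dots> = X powr \<alpha> * Y powr (1 - \<alpha>) * t powr \<beta>"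
      using assms by (simp add: X_def Y_def powr_mult)
    also have "\<dots> \<le> Mx powr \<alpha> * Mx powr (1 - \<alpha>) * t powr \<beta>"
      using 3 X0 Y0 by (intro mult_right_mono mult_mono powr_mono2) (auto simp: Mx_def)
    also have "Mx powr \<alpha> * Mx powr (1 - \<alpha>) = Mx"
      using X0 Y0 by (simp add: Mx_def flip: powr_add) 
    also have "Mx * t powr \<beta> \<le> (X + Y) * t powr \<beta>"
      using X0 Y0 by (intro mult_right_mono) (auto simp: Mx_def)
    also have "\<dots> = x * t powr (g1 + \<beta>) + y * t powr (g2 + \<beta>)"
      by (simp add: X_def Y_def powr_add algebra_simps)
    finally show ?thesis .
  qed
qed


theorem lemma6p5:
  fixes \<alpha> \<beta> c1 c2 :: real and m n :: nat
  assumes "0 \<le> \<alpha>" "\<alpha> \<le> 1" "\<beta> > -1" "m \<ge> 1" "n \<ge> 1" "c1 > 0" "c2 > 0"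
  shows "\<exists>C>0. \<forall>(f :: real \<Rightarrow> real) t0.
    (t0 > 0 \<and> (\<forall>t>0. f differentiable (at t)) \<and>
     completely_monotone (\<lambda>t. - deriv f t) \<and>
     (\<integral>\<^sup>+ t \<in> {0<..<t0}. ennreal (\<bar>f t\<bar> * t powr \<beta>) \<partial>lborel) < \<infinity>)
    \<longrightarrow>
    (\<integral>\<^sup>+ t \<in> {0<..<t0}.
        ennreal (npow \<bar>(deriv ^^ m) f (c1 * t)\<bar> \<alpha> * npow \<bar>(deriv ^^ n) f (c2 * t)\<bar> (1 - \<alpha>)
                 * t powr (real m * \<alpha> + real n * (1 - \<alpha>) + \<beta>)) \<partial>lborel)
      \<le> ennreal C * ((\<integral>\<^sup>+ t \<in> {0<..<t0}. ennreal (\<bar>f t\<bar> * t powr \<beta>) \<partial>lborel)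
                      + ennreal (\<bar>f t0\<bar> * t0 powr (1 + \<beta>)))
    \<and>
    (\<integral>\<^sup>+ t \<in> {0<..<t0}.
        ennreal (npow \<bar>f (c1 * t)\<bar> \<alpha> * npow \<bar>(deriv ^^ n) f (c2 * t)\<bar> (1 - \<alpha>)
                 * t powr (real n * (1 - \<alpha>) + \<beta>)) \<partial>lborel)
      \<le> ennreal C * ((\<integral>\<^sup>+ t \<in> {0<..<max c1 1 * t0}. ennreal (\<bar>f t\<bar> * t powr \<beta>) \<partial>lborel)
                      + ennreal (\<bar>f t0\<bar> * t0 powr (1 + \<beta>)))"
proof -
  have mS: "Suc (m - 1) = m" and nS: "Suc (n - 1) = n" using assms by auto
  obtain Km where Km: "Km > 0" "\<And>f t0. good f \<and> t0 > 0 \<and> (\<integral>\<^sup>+ t\<in>{0<..<t0}. ennreal (\<bar>f t\<bar> * t powr \<beta>) \<partial>lborel) < \<infinity> \<Longrightarrow>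
     (\<integral>\<^sup>+ t\<in>{0<..<t0}. ennreal (\<bar>(deriv^^m) f (c1 * t)\<bar> * t powr (real m + \<beta>)) \<partial>lborel)
       \<le> ennreal Km * ((\<integral>\<^sup>+ t\<in>{0<..<t0}. ennreal (\<bar>f t\<bar> * t powr \<beta>) \<partial>lborel) + ennreal (\<bar>f t0\<bar> * t0 powr (1 + \<beta>)))"
    using good_M1[OF assms(3) assms(6), of "m - 1"] unfolding mS by blast
  obtain Kn where Kn: "Kn > 0" "\<And>f t0. good f \<and> t0 > 0 \<and> (\<integral>\<^sup>+ t\<in>{0<..<t0}. ennreal (\<bar>f t\<bar> * t powr \<beta>) \<partial>lborel) < \<infinity> \<Longrightarrow>
     (\<integral>\<^sup>+ t\<in>{0<..<t0}. ennreal (\<bar>(deriv^^n) f (c2 * t)\<bar> * t powr (real n + \<beta>)) \<partial>lborel)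
       \<le> ennreal Kn * ((\<integral>\<^sup>+ t\<in>{0<..<t0}. ennreal (\<bar>f t\<bar> * t powr \<beta>) \<partial>lborel) + ennreal (\<bar>f t0\<bar> * t0 powr (1 + \<beta>)))"
    using good_M1[OF assms(3) assms(7), of "n - 1"] unfolding nS by blast
  define e1 where "e1 = c1 powr (-\<beta>) * (1 / c1)"
  have e10: "e1 > 0" unfolding e1_def using assms by simp
  define C where "C = Km + Kn + e1"
  have C0: "C > 0" unfolding C_def using Km Kn e10 by simp
  show ?thesis
  proof (intro exI[of _ C] conjI allI impI C0)
    fix f :: "real \<Rightarrow> real" and t0 :: real
    assume H: "t0 > 0 \<and> (\<forall>t>0. f differentiable (at t)) \<and>
     completely_monotone (\<lambda>t. - deriv f t) \<and>
     (\<integral>\<^sup>+ t \<in> {0<..<t0}. ennreal (\<bar>f t\<bar> * t powr \<beta>) \<partial>lborel) < \<infinity>"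
    then have f: "good f" and t0: "t0 > 0" unfolding good_def by auto
    have HH: "good f \<and> t0 > 0 \<and> (\<integral>\<^sup>+ t\<in>{0<..<t0}. ennreal (\<bar>f t\<bar> * t powr \<beta>) \<partial>lborel) < \<infinity>"
      using H f by auto
    define A where "A = (\<integral>\<^sup>+ t\<in>{0<..<t0}. ennreal (\<bar>f t\<bar> * t powr \<beta>) \<partial>lborel)"
    define A' where "A' = (\<integral>\<^sup>+ t\<in>{0<..<max c1 1 * t0}. ennreal (\<bar>f t\<bar> * t powr \<beta>) \<partial>lborel)"
    define B where "B = ennreal (\<bar>f t0\<bar> * t0 powr (1 + \<beta>))"
    define Im where "Im = (\<lambda>t. ennreal (\<bar>(deriv^^m) f (c1 * t)\<bar> * t powr (real m + \<beta>)) * indicator {0<..<t0} t)"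
    define In where "In = (\<lambda>t. ennreal (\<bar>(deriv^^n) f (c2 * t)\<bar> * t powr (real n + \<beta>)) * indicator {0<..<t0} t)"
    define I0 where "I0 = (\<lambda>t. ennreal (\<bar>(deriv^^0) f (c1 * t)\<bar> * t powr \<beta>) * indicator {0<..<t0} t)"
    have Imm: "Im \<in> borel_measurable borel" unfolding Im_def by (rule meas_scaled[OF f assms(6)])
    have Inm: "In \<in> borel_measurable borel" unfolding In_def by (rule meas_scaled[OF f assms(7)])
    have I0m: "I0 \<in> borel_measurable borel" unfolding I0_def by (rule meas_scaled[OF f assms(6)])
    have iIm: "(\<integral>\<^sup>+ t. Im t \<partial>lborel) \<le> ennreal Km * (A + B)"
      using Km(2)[OF HH] unfolding Im_def A_def B_def by simp
    have iIn: "(\<integral>\<^sup>+ t. In t \<partial>lborel) \<le> ennreal Kn * (A + B)"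
      using Kn(2)[OF HH] unfolding In_def A_def B_def by simp
    have t0le: "t0 \<le> max c1 1 * t0"
      using mult_right_mono[of 1 "max c1 1" t0] t0 by simp
    have AA': "A \<le> A'"
      unfolding A_def A'_def using t0 t0le
    proof (intro nn_integral_mono mult_left_mono)
      fix x :: real
      have "x < t0 \<Longrightarrow> x < max c1 1 * t0" using t0le by linarith
      then show "indicator {0<..<t0} x \<le> (indicator {0<..<max c1 1 * t0} x :: ennreal)"
        by (auto simp: indicator_def)
    qed auto
    define G' where "G' = (\<lambda>s. ennreal (\<bar>(deriv^^0) f (1 * s)\<bar> * s powr \<beta>) * indicator {0<..<max c1 1 * t0} s)"
    have G'm[measurable]: "G' \<in> borel_measurable borel" unfolding G'_def by (rule meas_scaled[OF f]) simp
    have pw0: "I0 t \<le> ennreal (c1 powr (-\<beta>)) * G' (c1 * t)" for t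
    proof (cases "t \<in> {0<..<t0}")
      case True
      then have tt: "0 < t" "t < t0" by auto
      have "c1 * t < max c1 1 * t0" using tt assms
        by (smt (verit, best) max.cobounded1 mult_strict_left_mono mult_right_mono)
      then have "G' (c1 * t) = ennreal (\<bar>f (c1 * t)\<bar> * (c1 * t) powr \<beta>)"
        using tt assms unfolding G'_def by simp
      then have "ennreal (c1 powr (-\<beta>)) * G' (c1 * t) = ennreal (c1 powr (-\<beta>) * (\<bar>f (c1 * t)\<bar> * (c1 * t) powr \<beta>))"
        using assms by (simp add: ennreal_mult)
      also have "c1 powr (-\<beta>) * (\<bar>f (c1 * t)\<bar> * (c1 * t) powr \<beta>) = \<bar>f (c1 * t)\<bar> * t powr \<beta>"
        using assms tt by (simp add: powr_mult powr_minus field_simps)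
      finally show ?thesis using True unfolding I0_def by simp
    qed (simp add: I0_def)
    have iI0: "(\<integral>\<^sup>+ t. I0 t \<partial>lborel) \<le> ennreal e1 * A'"
    proof -
      have "(\<integral>\<^sup>+ t. I0 t \<partial>lborel) \<le> (\<integral>\<^sup>+ t. ennreal (c1 powr (-\<beta>)) * G' (c1 * t) \<partial>lborel)"
        by (rule nn_integral_mono) (rule pw0)
      also have "\<dots> = ennreal (c1 powr (-\<beta>)) * (ennreal (1 / c1) * (\<integral>\<^sup>+ t. G' t \<partial>lborel))"
        by (simp add: nn_integral_cmult nn_subst[OF assms(6) G'm])
      also have "(\<integral>\<^sup>+ t. G' t \<partial>lborel) = A'" unfolding G'_def A'_def by simp
      also have "ennreal (c1 powr (-\<beta>)) * (ennreal (1 / c1) * A') = ennreal e1 * A'"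
      proof -
        have "ennreal (c1 powr (-\<beta>)) * ennreal (1 / c1) = ennreal e1"
          unfolding e1_def by (rule ennreal_mult[symmetric]) (use assms in auto)
        then show ?thesis by (simp add: mult.assoc[symmetric])
      qed
      finally show ?thesis .
    qed
    have pw1: "ennreal (npow \<bar>(deriv ^^ m) f (c1 * t)\<bar> \<alpha> * npow \<bar>(deriv ^^ n) f (c2 * t)\<bar> (1 - \<alpha>)
                 * t powr (real m * \<alpha> + real n * (1 - \<alpha>) + \<beta>)) * indicator {0<..<t0} t \<le> Im t + In t" for t
    proof (cases "t \<in> {0<..<t0}")
      case True
      then have tt: "t > 0" by auto
      have "ennreal (npow \<bar>(deriv ^^ m) f (c1 * t)\<bar> \<alpha> * npow \<bar>(deriv ^^ n) f (c2 * t)\<bar> (1 - \<alpha>)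
                 * t powr (real m * \<alpha> + real n * (1 - \<alpha>) + \<beta>))
         \<le> ennreal (\<bar>(deriv^^m) f (c1 * t)\<bar> * t powr (real m + \<beta>) + \<bar>(deriv^^n) f (c2 * t)\<bar> * t powr (real n + \<beta>))"
        by (rule ennreal_leI young_npow)+ (use assms tt in auto)
      then show ?thesis using True unfolding Im_def In_def by (simp add: ennreal_plus)
    qed (simp add: Im_def In_def)
    have pw2: "ennreal (npow \<bar>f (c1 * t)\<bar> \<alpha> * npow \<bar>(deriv ^^ n) f (c2 * t)\<bar> (1 - \<alpha>)
                 * t powr (real n * (1 - \<alpha>) + \<beta>)) * indicator {0<..<t0} t \<le> I0 t + In t" for t
    proof (cases "t \<in> {0<..<t0}")
      case True
      then have tt: "t > 0" by auto
      have "npow \<bar>f (c1 * t)\<bar> \<alpha> * npow \<bar>(deriv ^^ n) f (c2 * t)\<bar> (1 - \<alpha>)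
                 * t powr (0 * \<alpha> + real n * (1 - \<alpha>) + \<beta>)
         \<le> \<bar>f (c1 * t)\<bar> * t powr (0 + \<beta>) + \<bar>(deriv^^n) f (c2 * t)\<bar> * t powr (real n + \<beta>)"
        by (rule young_npow) (use assms tt in auto)
      then have "ennreal (npow \<bar>f (c1 * t)\<bar> \<alpha> * npow \<bar>(deriv ^^ n) f (c2 * t)\<bar> (1 - \<alpha>)
                 * t powr (real n * (1 - \<alpha>) + \<beta>))
         \<le> ennreal (\<bar>f (c1 * t)\<bar> * t powr \<beta> + \<bar>(deriv^^n) f (c2 * t)\<bar> * t powr (real n + \<beta>))"
        by (intro ennreal_leI) simp
      then show ?thesis using True unfolding I0_def In_def by (simp add: ennreal_plus)
    qed (simp add: I0_def In_def)
    have "(\<integral>\<^sup>+ t \<in> {0<..<t0}.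
        ennreal (npow \<bar>(deriv ^^ m) f (c1 * t)\<bar> \<alpha> * npow \<bar>(deriv ^^ n) f (c2 * t)\<bar> (1 - \<alpha>)
                 * t powr (real m * \<alpha> + real n * (1 - \<alpha>) + \<beta>)) \<partial>lborel)
        \<le> (\<integral>\<^sup>+ t. Im t + In t \<partial>lborel)"
      by (rule nn_integral_mono) (rule pw1)
    also have "\<dots> = (\<integral>\<^sup>+ t. Im t \<partial>lborel) + (\<integral>\<^sup>+ t. In t \<partial>lborel)"
      using Imm Inm by (simp add: nn_integral_add)
    also have "\<dots> \<le> ennreal Km * (A + B) + ennreal Kn * (A + B)"
      by (intro add_mono iIm iIn)
    also have "\<dots> = ennreal (Km + Kn) * (A + B)"
      using Km Kn by (simp add: ennreal_plus distrib_right)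
    also have "\<dots> \<le> ennreal C * (A + B)"
      unfolding C_def using e10 by (intro mult_right_mono ennreal_leI) auto
    finally show "(\<integral>\<^sup>+ t \<in> {0<..<t0}.
        ennreal (npow \<bar>(deriv ^^ m) f (c1 * t)\<bar> \<alpha> * npow \<bar>(deriv ^^ n) f (c2 * t)\<bar> (1 - \<alpha>)
                 * t powr (real m * \<alpha> + real n * (1 - \<alpha>) + \<beta>)) \<partial>lborel)
      \<le> ennreal C * ((\<integral>\<^sup>+ t \<in> {0<..<t0}. ennreal (\<bar>f t\<bar> * t powr \<beta>) \<partial>lborel)
                      + ennreal (\<bar>f t0\<bar> * t0 powr (1 + \<beta>)))"
      unfolding A_def B_def .
    have "(\<integral>\<^sup>+ t \<in> {0<..<t0}.
        ennreal (npow \<bar>f (c1 * t)\<bar> \<alpha> * npow \<bar>(deriv ^^ n) f (c2 * t)\<bar> (1 - \<alpha>)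
                 * t powr (real n * (1 - \<alpha>) + \<beta>)) \<partial>lborel)
        \<le> (\<integral>\<^sup>+ t. I0 t + In t \<partial>lborel)"
      by (rule nn_integral_mono) (rule pw2)
    also have "\<dots> = (\<integral>\<^sup>+ t. I0 t \<partial>lborel) + (\<integral>\<^sup>+ t. In t \<partial>lborel)"
      using I0m Inm by (simp add: nn_integral_add)
    also have "\<dots> \<le> ennreal e1 * (A' + B) + ennreal Kn * (A' + B)"
    proof (intro add_mono)
      show "(\<integral>\<^sup>+ t. I0 t \<partial>lborel) \<le> ennreal e1 * (A' + B)"
        using iI0 by (rule order_trans) (simp add: mult_left_mono)
      show "(\<integral>\<^sup>+ t. In t \<partial>lborel) \<le> ennreal Kn * (A' + B)"
        using iIn by (rule order_trans) (simp add: mult_left_mono AA')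
    qed
    also have "\<dots> = ennreal (e1 + Kn) * (A' + B)"
      using e10 Kn by (simp add: ennreal_plus distrib_right)
    also have "\<dots> \<le> ennreal C * (A' + B)"
      unfolding C_def using Km by (intro mult_right_mono ennreal_leI) auto
    finally show "(\<integral>\<^sup>+ t \<in> {0<..<t0}.
        ennreal (npow \<bar>f (c1 * t)\<bar> \<alpha> * npow \<bar>(deriv ^^ n) f (c2 * t)\<bar> (1 - \<alpha>)
                 * t powr (real n * (1 - \<alpha>) + \<beta>)) \<partial>lborel)
      \<le> ennreal C * ((\<integral>\<^sup>+ t \<in> {0<..<max c1 1 * t0}. ennreal (\<bar>f t\<bar> * t powr \<beta>) \<partial>lborel)
                      + ennreal (\<bar>f t0\<bar> * t0 powr (1 + \<beta>)))"
      unfolding A'_def B_def .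
  qed
qed

end
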